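(* Let $Y(y)=\int^y\frac{e^{3/(2s)}}{|s|^{3/2}}\,ds$ be a fixed antiderivative on an open interval not containing $0$, and for $\kappa\in\mathbb R\setminus\{0\}$ let $g[\kappa]=\kappa\,(Y(y)+x)\,dx\,dy$. If $\kappa,\tilde\kappa\in\mathbb R\setminus\{0\}$ and there is a local diffeomorphism $\phi$ between open subsets of the domain with $\phi^*g[\tilde\kappa]=g[\kappa]$, then $\kappa=\tilde\kappa$.
   Context: $dx\,dy$ denotes the symmetric product $\tfrac12(dx\otimes dy+dy\otimes dx)$. *)

theory Defs
  imports "HOL-Analysis.Analysis"
begin

fun Ck_on :: "nat \<Rightarrow> (real \<times> real) set \<Rightarrow> (real \<times> real \<Rightarrow> 'b::real_normed_vector) \<Rightarrow> bool" where
  "Ck_on 0 U f = continuous_on U f"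
| "Ck_on (Suc k) U f = (f differentiable_on U \<and>
      (\<forall>v. Ck_on k U (\<lambda>p. frechet_derivative f (at p) v)))"

definition smooth_on :: "(real \<times> real) set \<Rightarrow> (real \<times> real \<Rightarrow> 'b::real_normed_vector) \<Rightarrow> bool" where
  "smooth_on U f \<longleftrightarrow> (\<forall>k. Ck_on k U f)"

definition local_diffeo_on :: "(real \<times> real) set \<Rightarrow> (real \<times> real \<Rightarrow> real \<times> real) \<Rightarrow> bool" where
  "local_diffeo_on U \<phi> \<longleftrightarrow> open U \<and>
     (\<forall>p\<in>U. \<exists>W. open W \<and> p \<in> W \<and> W \<subseteq> U \<and> open (\<phi> ` W) \<and> inj_on \<phi> W \<and>
        smooth_on W \<phi> \<and> smooth_on (\<phi> ` W) (the_inv_into W \<phi>))"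

text \<open>The metric g[kappa] = kappa (Y(y)+x) dx dy, with dx dy the symmetric product
  (dx(v)dy(w) + dy(v)dx(w))/2, as a bilinear form at the point (x,y).\<close>
definition gmet :: "(real \<Rightarrow> real) \<Rightarrow> real \<Rightarrow> real \<times> real \<Rightarrow> real \<times> real \<Rightarrow> real \<times> real \<Rightarrow> real" where
  "gmet Y \<kappa> p v w = \<kappa> * (Y (snd p) + fst p) * ((fst v * snd w + snd v * fst w) / 2)"

definition pullback :: "(real \<times> real \<Rightarrow> real \<times> real) \<Rightarrow> (real \<times> real \<Rightarrow> real \<times> real \<Rightarrow> real \<times> real \<Rightarrow> real)
    \<Rightarrow> real \<times> real \<Rightarrow> real \<times> real \<Rightarrow> real \<times> real \<Rightarrow> real" where
  "pullback \<phi> g p v w = g (\<phi> p) (frechet_derivative \<phi> (at p) v) (frechet_derivative \<phi> (at p) w)"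

end

theory Submission
  imports Defs "HOL-Computational_Algebra.Polynomial"
begin

definition ff :: "real \<Rightarrow> real" where "ff s = exp (3 / (2 * s)) / \<bar>s\<bar> powr (3/2)"
definition gg :: "real \<Rightarrow> real" where "gg s = -(3/2) * (1/s^2 + 1/s)"

lemma ff_alt: "s \<noteq> 0 \<Longrightarrow> ff s = exp (3 / (2 * s) - 3/2 * ln \<bar>s\<bar>)"
  by (simp add: ff_def powr_def exp_diff)

lemma ff_pos: "s \<noteq> 0 \<Longrightarrow> ff s > 0"
  by (simp add: ff_alt)

lemma ff_deriv: assumes "s \<noteq> 0" shows "(ff has_real_derivative ff s * gg s) (at s)"
proof (cases "s > 0")
  case True
  have "((\<lambda>t. exp (3 / (2 * t) - 3/2 * ln t)) has_real_derivative
        exp (3 / (2 * s) - 3/2 * ln s) * (- 3 / (2 * s^2) - 3/2 * (1/s))) (at s)"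
    using True by (auto intro!: derivative_eq_intros simp: power2_eq_square field_simps)
  then have "((\<lambda>t. exp (3 / (2 * t) - 3/2 * ln t)) has_real_derivative ff s * gg s) (at s)"
    by (rule DERIV_cong) (use True in \<open>simp add: ff_alt gg_def field_simps power2_eq_square\<close>)
  then show ?thesis
    by (rule has_field_derivative_transform_within_open[where S="{0<..}"]) (use True in \<open>auto simp: ff_alt\<close>)
next
  case False
  then have s: "s < 0" using assms by simp
  have "((\<lambda>t. exp (3 / (2 * t) - 3/2 * ln (-t))) has_real_derivative
        exp (3 / (2 * s) - 3/2 * ln (-s)) * (- 3 / (2 * s^2) - 3/2 * (1/s))) (at s)"
    using s by (auto intro!: derivative_eq_intros simp: power2_eq_square field_simps)
  then have "((\<lambda>t. exp (3 / (2 * t) - 3/2 * ln (-t))) has_real_derivative ff s * gg s) (at s)"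
    by (rule DERIV_cong) (use s in \<open>simp add: ff_alt gg_def field_simps power2_eq_square\<close>)
  then show ?thesis
    by (rule has_field_derivative_transform_within_open[where S="{..<0}"]) (use s in \<open>auto simp: ff_alt\<close>)
qed

lemma gg_deriv: assumes "s \<noteq> 0" shows "(gg has_real_derivative (3/2) * (2/s^3 + 1/s^2)) (at s)"
  unfolding gg_def using assms
  by (auto intro!: derivative_eq_intros simp: power2_eq_square power3_eq_cube field_simps)

lemma deriv_eq:
  fixes u v :: "real \<Rightarrow> real"
  assumes "open S" "x \<in> S" "\<And>z. z \<in> S \<Longrightarrow> u z = v z"
    "(u has_real_derivative du) (at x)" "(v has_real_derivative dv) (at x)"
  shows "du = dv"
proof -
  have "(v has_real_derivative du) (at x)"
    by (rule has_field_derivative_transform_within_open[OF assms(4,1,2)]) (use assms(3) in auto)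
  then show ?thesis using assms(5) DERIV_unique by blast
qed

lemma quad_zero:
  fixes c0 c1 c2 :: real
  assumes "\<And>y. y \<in> S \<Longrightarrow> c0 + c1 * y + c2 * y^2 = 0" "infinite S"
  shows "c0 = 0 \<and> c1 = 0 \<and> c2 = 0"
proof -
  have ev: "poly [:c0, c1, c2:] y = c0 + c1 * y + c2 * y^2" for y
    by (simp add: algebra_simps power2_eq_square)
  have "[:c0, c1, c2:] = 0"
  proof (rule ccontr)
    assume "[:c0, c1, c2:] \<noteq> 0"
    then have "finite {y. poly [:c0, c1, c2:] y = 0}" by (rule poly_roots_finite)
    moreover have "S \<subseteq> {y. poly [:c0, c1, c2:] y = 0}"
    proof
      fix y assume "y \<in> S"
      then have "c0 + c1 * y + c2 * y^2 = 0" by (rule assms(1))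
      then show "y \<in> {y. poly [:c0, c1, c2:] y = 0}" by (simp only: ev mem_Collect_eq)
    qed
    ultimately show False using assms(2) finite_subset by blast
  qed
  then show ?thesis by simp
qed

lemma Y_strict:
  assumes YD: "\<And>s. s \<in> I \<Longrightarrow> (Y has_real_derivative ff s) (at s)" and I0: "0 \<notin> I"
    and J: "{yl<..<yr} \<subseteq> I" and y: "y1 \<in> {yl<..<yr}" "y2 \<in> {yl<..<yr}" "y1 < y2"
  shows "Y y1 < Y y2"
proof (rule DERIV_pos_imp_increasing[OF y(3)])
  fix x assume "y1 \<le> x" "x \<le> y2"
  then have "x \<in> I" using y J by auto
  then show "\<exists>d. (Y has_real_derivative d) (at x) \<and> 0 < d"
    using YD ff_pos I0 by (metis)
qed


lemma canc: fixes K a G H :: real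
  assumes "K \<noteq> 0" "a \<noteq> 0" "(K * G / (3 * a)) ^ 2 = K^2 * H / (6 * a^2)"
  shows "2 * G^2 = 3 * H"
proof -
  have e: "G^2 * (K^2 / a^2) / 9 = H * (K^2 / a^2) / 6"
    using assms(3) by (simp add: power_mult_distrib power_divide ac_simps)
  have "K^2 / a^2 \<noteq> 0" using assms by simp
  then show ?thesis using e by (simp add: field_simps)
qed

lemma fin: fixes y :: real assumes "y \<noteq> 0" "2 * (-(3/2) * (1/y^2 + 1/y))^2 = 3 * ((3/2) * (2/y^3 + 1/y^2))"
  shows False
proof -
  have "(9/2) * ((1 + y)^2 / y^4) = (9/2) * ((2*y + y^2) / y^4)"
    using assms by (simp add: field_simps power2_eq_square power3_eq_cube power4_eq_xxxx)
  then have "(1 + y)^2 = 2*y + y^2" using assms(1) by simp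
  then show False by (simp add: power2_eq_square algebra_simps)
qed



lemma NS_case:
  fixes Y a a' b b' :: "real \<Rightarrow> real" and \<kappa> \<kappa>' :: real
  assumes I0: "0 \<notin> I" and YD: "\<And>s. s \<in> I \<Longrightarrow> (Y has_real_derivative ff s) (at s)"
    and Lne: "xl < xr" and Jne: "yl < yr" and JI: "{yl<..<yr} \<subseteq> I"
    and bI: "\<And>y. y \<in> {yl<..<yr} \<Longrightarrow> b y \<in> I"
    and aD: "\<And>x. x \<in> {xl<..<xr} \<Longrightarrow> (a has_real_derivative a' x) (at x)"
    and a'0: "\<And>x. x \<in> {xl<..<xr} \<Longrightarrow> a' x \<noteq> 0"
    and bD: "\<And>y. y \<in> {yl<..<yr} \<Longrightarrow> (b has_real_derivative b' y) (at y)"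
    and b'0: "\<And>y. y \<in> {yl<..<yr} \<Longrightarrow> b' y \<noteq> 0"
    and iden: "\<And>x y. x \<in> {xl<..<xr} \<Longrightarrow> y \<in> {yl<..<yr} \<Longrightarrow>
        \<kappa>' * (Y (b y) + a x) * (a' x * b' y) = \<kappa> * (Y y + x)"
    and k: "\<kappa> \<noteq> 0" "\<kappa>' \<noteq> 0"
  shows "\<kappa> = \<kappa>'"
proof -
  define L where "L = {xl<..<xr}"
  define J where "J = {yl<..<yr}"
  have oL: "open L" and oJ: "open J" by (auto simp: L_def J_def)
  define x1 where "x1 = xl + (xr - xl) / 3"
  define x2 where "x2 = xl + 2 * (xr - xl) / 3"
  define y1 where "y1 = yl + (yr - yl) / 3"
  define y2 where "y2 = yl + 2 * (yr - yl) / 3"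
  have x1: "x1 \<in> L" and x2: "x2 \<in> L" and x12: "x1 \<noteq> x2"
    using Lne by (auto simp: L_def x1_def x2_def field_simps)
  have y1: "y1 \<in> J" and y2: "y2 \<in> J" and y12: "y1 < y2"
    using Jne by (auto simp: J_def y1_def y2_def field_simps)
  have Y12: "Y y1 < Y y2"
    using Y_strict[OF YD I0 JI] y1 y2 y12 unfolding J_def by blast
  define c1 where "c1 = \<kappa>' * b' y1"
  define c2 where "c2 = \<kappa>' * b' y2"
  have c1: "c1 \<noteq> 0" and c2: "c2 \<noteq> 0"
    using b'0 y1 y2 k by (auto simp: c1_def c2_def J_def)
  define d1 where "d1 = Y (b y1)"
  define d2 where "d2 = Y (b y2)"
  define k1 where "k1 = \<kappa> / c1"
  define k2 where "k2 = \<kappa> / c2"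
  have k1: "k1 \<noteq> 0" and k2: "k2 \<noteq> 0" using k c1 c2 by (auto simp: k1_def k2_def)
  have e1: "a' x * (d1 + a x) = k1 * (Y y1 + x)" if "x \<in> L" for x
  proof -
    have "\<kappa>' * (Y (b y1) + a x) * (a' x * b' y1) = \<kappa> * (Y y1 + x)"
      using iden that y1 by (auto simp: L_def J_def)
    then show ?thesis using c1 by (simp add: c1_def d1_def k1_def field_simps)
  qed
  have e2: "a' x * (d2 + a x) = k2 * (Y y2 + x)" if "x \<in> L" for x
  proof -
    have "\<kappa>' * (Y (b y2) + a x) * (a' x * b' y2) = \<kappa> * (Y y2 + x)"
      using iden that y2 by (auto simp: L_def J_def)
    then show ?thesis using c2 by (simp add: c2_def d2_def k2_def field_simps)
  qed
  have d12: "d1 \<noteq> d2"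
  proof
    assume "d1 = d2"
    then have eq: "k1 * (Y y1 + x) = k2 * (Y y2 + x)" if "x \<in> L" for x
      using e1[OF that] e2[OF that] by simp
    have "k1 * (x1 - x2) = k1 * (Y y1 + x1) - k1 * (Y y1 + x2)"
      by (simp add: algebra_simps)
    also have "\<dots> = k2 * (Y y2 + x1) - k2 * (Y y2 + x2)"
      using eq[OF x1] eq[OF x2] by simp
    also have "\<dots> = k2 * (x1 - x2)" by (simp add: algebra_simps)
    finally have "k1 * (x1 - x2) = k2 * (x1 - x2)" .
    then have "k1 = k2" using x12 by simp
    with eq[OF x1] have "Y y1 + x1 = Y y2 + x1" using k1 by simp
    then show False using Y12 by simp
  qed
  define p where "p = (k1 - k2) / (d1 - d2)"
  define q where "q = (k1 * Y y1 - k2 * Y y2) / (d1 - d2)"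
  have lin: "a' x = p * x + q" if "x \<in> L" for x
  proof -
    have "a' x * (d1 - d2) = (k1 - k2) * x + (k1 * Y y1 - k2 * Y y2)"
      using e1[OF that] e2[OF that] by (simp add: algebra_simps)
    also have "\<dots> = x * (p * (d1 - d2)) + q * (d1 - d2)"
      using d12 by (simp add: p_def q_def)
    also have "\<dots> = (p * x + q) * (d1 - d2)" by (simp add: algebra_simps)
    finally show ?thesis using d12 by simp
  qed
  have aD': "(a has_real_derivative p * x + q) (at x)" if "x \<in> L" for x
    using aD[of x] lin[OF that] that by (simp add: L_def)
  have D1: "p * (d1 + a x) + (p * x + q) * (p * x + q) = 0 + k1" if "x \<in> L" for x
  proof (rule deriv_eq[OF oL that])
    show "(p * z + q) * (d1 + a z) = k1 * (Y y1 + z)" if "z \<in> L" for z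
      using e1[OF that] lin[OF that] by simp
    show "((\<lambda>z. (p * z + q) * (d1 + a z)) has_real_derivative
        p * (d1 + a x) + (p * x + q) * (p * x + q)) (at x)"
      using aD'[OF that] by (auto intro!: derivative_eq_intros)
    show "((\<lambda>z. k1 * (Y y1 + z)) has_real_derivative 0 + k1) (at x)"
      by (auto intro!: derivative_eq_intros)
  qed
  have p0: "p = 0"
  proof -
    have "p * (p * x1 + q) + 2 * (p * x1 + q) * p = 0"
    proof (rule deriv_eq[OF oL x1])
      show "p * (d1 + a z) + (p * z + q) * (p * z + q) = k1" if "z \<in> L" for z
        using D1[OF that] by simp
      show "((\<lambda>z. p * (d1 + a z) + (p * z + q) * (p * z + q)) has_real_derivative
          p * (p * x1 + q) + 2 * (p * x1 + q) * p) (at x1)"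
        using aD'[OF x1] by (auto intro!: derivative_eq_intros simp: algebra_simps)
      show "((\<lambda>z. k1) has_real_derivative 0) (at x1)" by simp
    qed
    then have "3 * p * (p * x1 + q) = 0" by (simp add: algebra_simps)
    moreover have "p * x1 + q \<noteq> 0" using a'0[of x1] lin[OF x1] x1 by (simp add: L_def)
    ultimately show ?thesis by simp
  qed
  have aq: "a' x = q" if "x \<in> L" for x using lin[OF that] p0 by simp
  have q0: "q \<noteq> 0" using aq[OF x1] a'0[of x1] x1 by (simp add: L_def)
  define \<alpha> where "\<alpha> = \<kappa> / (\<kappa>' * q^2)"
  have a0: "\<alpha> \<noteq> 0" using k q0 by (simp add: \<alpha>_def)
  have bc: "b' y = \<alpha>" if "y \<in> J" for y
  proof -
    have "\<kappa>' * q * (q * b' y) = 0 + \<kappa> * 1"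
    proof (rule deriv_eq[OF oL x1])
      show "\<kappa>' * (Y (b y) + a z) * (q * b' y) = \<kappa> * (Y y + z)" if "z \<in> L" for z
        using iden[of z y] that \<open>y \<in> J\<close> aq[OF that] by (simp add: L_def J_def)
      show "((\<lambda>z. \<kappa>' * (Y (b y) + a z) * (q * b' y)) has_real_derivative \<kappa>' * q * (q * b' y)) (at x1)"
        using aD'[OF x1] p0 by (auto intro!: derivative_eq_intros)
      show "((\<lambda>z. \<kappa> * (Y y + z)) has_real_derivative 0 + \<kappa> * 1) (at x1)"
        by (auto intro!: derivative_eq_intros)
    qed
    then show ?thesis using k q0 by (simp add: \<alpha>_def field_simps power2_eq_square)
  qed
  define C where "C = q * x1 - a x1"
  have Yb: "Y (b y) = q * Y y + C" if "y \<in> J" for y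
  proof -
    have "\<kappa>' * (Y (b y) + a x1) * (q * \<alpha>) = \<kappa> * (Y y + x1)"
      using iden[of x1 y] x1 that aq[OF x1] bc[OF that] by (simp add: L_def J_def)
    then have A: "(Y (b y) + a x1) * (\<kappa>' * (q * \<alpha>)) = \<kappa> * (Y y + x1)" by (simp add: ac_simps)
    have h: "\<kappa>' * (q * \<alpha>) = \<kappa> / q" using k q0 by (simp add: \<alpha>_def power2_eq_square field_simps)
    have "\<kappa> * (Y (b y) + a x1) = ((Y (b y) + a x1) * (\<kappa> / q)) * q" using q0 by simp
    also have "\<dots> = \<kappa> * (q * (Y y + x1))" using A h by simp
    finally have "Y (b y) + a x1 = q * (Y y + x1)" using k by simp
    then show ?thesis by (simp add: C_def algebra_simps)
  qed
  have bD': "(b has_real_derivative \<alpha>) (at y)" if "y \<in> J" for y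
    using bD[of y] bc[OF that] that by (simp add: J_def)
  have bI': "b y \<in> I" "b y \<noteq> 0" if "y \<in> J" for y using bI[of y] that I0 by (auto simp: J_def)
  have yI: "y \<in> I" "y \<noteq> 0" if "y \<in> J" for y using JI that I0 by (auto simp: J_def)
  have F1: "ff (b y) * \<alpha> = q * ff y" if "y \<in> J" for y
  proof (rule deriv_eq[OF oJ that])
    show "Y (b z) = q * Y z + C" if "z \<in> J" for z using Yb[OF that] .
    show "((\<lambda>z. Y (b z)) has_real_derivative ff (b y) * \<alpha>) (at y)"
      by (rule DERIV_chain2[OF YD[OF bI'(1)[OF that]] bD'[OF that]])
    show "((\<lambda>z. q * Y z + C) has_real_derivative q * ff y) (at y)"
      using YD[OF yI(1)[OF that]] by (auto intro!: derivative_eq_intros)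
  qed
  have F2: "\<alpha> * gg (b y) = gg y" if "y \<in> J" for y
  proof -
    have "ff (b y) * gg (b y) * \<alpha> * \<alpha> = q * (ff y * gg y)"
    proof (rule deriv_eq[OF oJ that])
      show "ff (b z) * \<alpha> = q * ff z" if "z \<in> J" for z using F1[OF that] .
      show "((\<lambda>z. ff (b z) * \<alpha>) has_real_derivative ff (b y) * gg (b y) * \<alpha> * \<alpha>) (at y)"
        using DERIV_chain2[OF ff_deriv[OF bI'(2)[OF that]] bD'[OF that]]
        by (auto intro!: derivative_eq_intros)
      show "((\<lambda>z. q * ff z) has_real_derivative q * (ff y * gg y)) (at y)"
        using ff_deriv[OF yI(2)[OF that]] by (auto intro!: derivative_eq_intros)
    qed
    also have "\<dots> = ff (b y) * \<alpha> * gg y" using F1[OF that] by simp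
    finally have "ff (b y) * \<alpha> * (\<alpha> * gg (b y) - gg y) = 0" by (simp add: algebra_simps)
    then show ?thesis using ff_pos[OF bI'(2)[OF that]] a0 by simp
  qed
  obtain \<nu> where baff: "\<And>y. y \<in> J \<Longrightarrow> b y - \<alpha> * y = \<nu>"
  proof -
    have "\<exists>c. \<forall>y\<in>J. b y - \<alpha> * y = c"
    proof (rule has_field_derivative_zero_constant)
      show "convex J" by (simp add: J_def)
      fix y assume "y \<in> J"
      have "((\<lambda>y. b y - \<alpha> * y) has_real_derivative \<alpha> - \<alpha> * 1) (at y)"
        using bD'[OF \<open>y \<in> J\<close>] by (auto intro!: derivative_eq_intros)
      then show "((\<lambda>y. b y - \<alpha> * y) has_real_derivative 0) (at y within J)"
        by (simp add: has_field_derivative_at_within)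
    qed
    then show ?thesis using that by blast
  qed
  have poly: "\<nu>^2 + (2 * \<alpha> * \<nu> + \<nu>^2) * y + (\<alpha>^2 + \<alpha> * \<nu> - \<alpha>) * y^2 = 0" if "y \<in> J" for y
  proof -
    define z where "z = \<alpha> * y + \<nu>"
    have bz: "b y = z" using baff[OF that] by (simp add: z_def)
    have z0: "z \<noteq> 0" using bI'(2)[OF that] bz by simp
    have y0: "y \<noteq> 0" using yI(2)[OF that] .
    have "\<alpha> * (-(3/2) * (1 / z^2 + 1 / z)) = -(3/2) * (1 / y^2 + 1 / y)"
      using F2[OF that] bz by (simp only: gg_def)
    then have "-(3/2) * (\<alpha> * (1 / z^2 + 1 / z)) = -(3/2) * (1 / y^2 + 1 / y)"
      by (simp only: mult.left_commute)
    then have "\<alpha> * (1 / z^2 + 1 / z) = 1 / y^2 + 1 / y"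
      by (rule mult_left_cancel[THEN iffD1, rotated]) simp
    then have "\<alpha> * y^2 * (1 + z) = z^2 * (1 + y)"
      using z0 y0 by (simp add: field_simps power2_eq_square)
    then show ?thesis by (simp add: z_def algebra_simps power2_eq_square)
  qed
  have "\<nu>^2 = 0 \<and> 2 * \<alpha> * \<nu> + \<nu>^2 = 0 \<and> \<alpha>^2 + \<alpha> * \<nu> - \<alpha> = 0"
    by (rule quad_zero[where S=J, OF poly]) (use Jne in \<open>simp_all add: J_def\<close>)
  then have "\<nu> = 0" "\<alpha> = 1" using a0 by (auto simp: power2_eq_square algebra_simps)
  then have "b y1 = y1" using baff[OF y1] by simp
  then have "q = 1" using F1[OF y1] \<open>\<alpha> = 1\<close> ff_pos[OF yI(2)[OF y1]] by simp
  then show ?thesis using \<open>\<alpha> = 1\<close> k by (simp add: \<alpha>_def field_simps)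
qed



lemma SW_case:
  fixes Y a a' b b' :: "real \<Rightarrow> real" and \<kappa> \<kappa>' :: real
  assumes I0: "0 \<notin> I" and YD: "\<And>s. s \<in> I \<Longrightarrow> (Y has_real_derivative ff s) (at s)"
    and Lne: "xl < xr" and Jne: "yl < yr" and JI: "{yl<..<yr} \<subseteq> I"
    and aD: "\<And>y. y \<in> {yl<..<yr} \<Longrightarrow> (a has_real_derivative a' y) (at y)"
    and a'0: "\<And>y. y \<in> {yl<..<yr} \<Longrightarrow> a' y \<noteq> 0"
    and b'0: "\<And>x. x \<in> {xl<..<xr} \<Longrightarrow> b' x \<noteq> 0"
    and iden: "\<And>x y. x \<in> {xl<..<xr} \<Longrightarrow> y \<in> {yl<..<yr} \<Longrightarrow>
        \<kappa>' * (Y (b x) + a y) * (a' y * b' x) = \<kappa> * (Y y + x)"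
    and k: "\<kappa> \<noteq> 0" "\<kappa>' \<noteq> 0"
  shows False
proof -
  define L where "L = {xl<..<xr}"
  define J where "J = {yl<..<yr}"
  have oL: "open L" and oJ: "open J" by (auto simp: L_def J_def)
  define x1 where "x1 = xl + (xr - xl) / 3"
  define x2 where "x2 = xl + 2 * (xr - xl) / 3"
  define y1 where "y1 = yl + (yr - yl) / 3"
  define y2 where "y2 = yl + 2 * (yr - yl) / 3"
  have x1: "x1 \<in> L" and x2: "x2 \<in> L" and x12: "x1 \<noteq> x2"
    using Lne by (auto simp: L_def x1_def x2_def field_simps)
  have y1: "y1 \<in> J" and y2: "y2 \<in> J" and y12: "y1 < y2"
    using Jne by (auto simp: J_def y1_def y2_def field_simps)
  have Y12: "Y y1 < Y y2"
    using Y_strict[OF YD I0 JI] y1 y2 y12 unfolding J_def by blast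
  have yI: "y \<in> I" "y \<noteq> 0" if "y \<in> J" for y using JI that I0 by (auto simp: J_def)
  define u1 where "u1 = \<kappa>' * b' x1"
  define u2 where "u2 = \<kappa>' * b' x2"
  have u1: "u1 \<noteq> 0" and u2: "u2 \<noteq> 0"
    using b'0 x1 x2 k by (auto simp: u1_def u2_def L_def)
  define e1 where "e1 = Y (b x1)"
  define e2 where "e2 = Y (b x2)"
  define k1 where "k1 = \<kappa> / u1"
  define k2 where "k2 = \<kappa> / u2"
  have k1: "k1 \<noteq> 0" and k2: "k2 \<noteq> 0" using k u1 u2 by (auto simp: k1_def k2_def)
  have E1: "a' y * (e1 + a y) = k1 * (Y y + x1)" if "y \<in> J" for y
  proof -
    have "\<kappa>' * (Y (b x1) + a y) * (a' y * b' x1) = \<kappa> * (Y y + x1)"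
      using iden that x1 by (auto simp: L_def J_def)
    then show ?thesis using u1 by (simp add: u1_def e1_def k1_def field_simps)
  qed
  have E2: "a' y * (e2 + a y) = k2 * (Y y + x2)" if "y \<in> J" for y
  proof -
    have "\<kappa>' * (Y (b x2) + a y) * (a' y * b' x2) = \<kappa> * (Y y + x2)"
      using iden that x2 by (auto simp: L_def J_def)
    then show ?thesis using u2 by (simp add: u2_def e2_def k2_def field_simps)
  qed
  have e12: "e1 \<noteq> e2"
  proof
    assume "e1 = e2"
    then have eq: "k1 * (Y y + x1) = k2 * (Y y + x2)" if "y \<in> J" for y
      using E1[OF that] E2[OF that] by simp
    have "(k1 - k2) * (Y y1 - Y y2) = (k1 * (Y y1 + x1) - k2 * (Y y1 + x2)) - (k1 * (Y y2 + x1) - k2 * (Y y2 + x2))"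
      by (simp add: algebra_simps)
    also have "\<dots> = 0" using eq[OF y1] eq[OF y2] by simp
    finally have "k1 = k2" using Y12 by simp
    with eq[OF y1] have "x1 = x2" using k1 by simp
    then show False using x12 by simp
  qed
  define \<alpha> where "\<alpha> = (k1 - k2) / (e1 - e2)"
  define \<beta> where "\<beta> = (k1 * x1 - k2 * x2) / (e1 - e2)"
  define W where "W y = \<alpha> * Y y + \<beta>" for y
  have lin: "a' y = W y" if "y \<in> J" for y
  proof -
    have "a' y * (e1 - e2) = (k1 - k2) * Y y + (k1 * x1 - k2 * x2)"
      using E1[OF that] E2[OF that] by (simp add: algebra_simps)
    also have "\<dots> = Y y * (\<alpha> * (e1 - e2)) + \<beta> * (e1 - e2)"
      using e12 by (simp add: \<alpha>_def \<beta>_def)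
    also have "\<dots> = W y * (e1 - e2)" by (simp add: W_def algebra_simps)
    finally show ?thesis using e12 by simp
  qed
  have W0: "W y \<noteq> 0" if "y \<in> J" for y using a'0[of y] lin[OF that] that by (simp add: J_def)
  have WD: "(W has_real_derivative \<alpha> * ff y) (at y)" if "y \<in> J" for y
    unfolding W_def using YD[OF yI(1)[OF that]] by (auto intro!: derivative_eq_intros)
  have aD': "(a has_real_derivative W y) (at y)" if "y \<in> J" for y
    using aD[of y] lin[OF that] that by (simp add: J_def)
  have WE: "W y * (e1 + a y) = k1 * (Y y + x1)" if "y \<in> J" for y
    using E1[OF that] lin[OF that] by simp
  have D1: "\<alpha> * ff y * (e1 + a y) + W y * W y = k1 * ff y" if "y \<in> J" for y
  proof (rule deriv_eq[OF oJ that])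
    show "W z * (e1 + a z) = k1 * (Y z + x1)" if "z \<in> J" for z using WE[OF that] .
    show "((\<lambda>z. W z * (e1 + a z)) has_real_derivative \<alpha> * ff y * (e1 + a y) + W y * W y) (at y)"
      using WD[OF that] aD'[OF that] by (auto intro!: derivative_eq_intros)
    show "((\<lambda>z. k1 * (Y z + x1)) has_real_derivative k1 * ff y) (at y)"
      using YD[OF yI(1)[OF that]] by (auto intro!: derivative_eq_intros)
  qed
  define K where "K = k1 * (\<beta> - \<alpha> * x1)"
  have cube: "W y ^ 3 = K * ff y" if "y \<in> J" for y
  proof -
    have "W y ^ 3 = W y * (W y * W y)" by (simp add: power3_eq_cube)
    also have "\<dots> = W y * (k1 * ff y - \<alpha> * ff y * (e1 + a y))"
    proof -
      have ww: "W y * W y = k1 * ff y - \<alpha> * ff y * (e1 + a y)" using D1[OF that] by linarith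
      show ?thesis by (simp only: ww)
    qed
    also have "\<dots> = k1 * ff y * W y - \<alpha> * ff y * (W y * (e1 + a y))" by (simp add: algebra_simps)
    also have "\<dots> = k1 * ff y * W y - \<alpha> * ff y * (k1 * (Y y + x1))" using WE[OF that] by simp
    also have "\<dots> = k1 * ff y * (W y - \<alpha> * Y y - \<alpha> * x1)" by (simp add: algebra_simps)
    also have "\<dots> = K * ff y" by (simp add: W_def K_def algebra_simps)
    finally show ?thesis .
  qed
  have K0: "K \<noteq> 0" using cube[OF y1] W0[OF y1] by auto
  have D2: "3 * W y ^ 2 * (\<alpha> * ff y) = K * (ff y * gg y)" if "y \<in> J" for y
  proof (rule deriv_eq[OF oJ that])
    show "W z ^ 3 = K * ff z" if "z \<in> J" for z using cube[OF that] .
    show "((\<lambda>z. W z ^ 3) has_real_derivative 3 * W y ^ 2 * (\<alpha> * ff y)) (at y)"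
      using WD[OF that] by (auto intro!: derivative_eq_intros)
    show "((\<lambda>z. K * ff z) has_real_derivative K * (ff y * gg y)) (at y)"
      using ff_deriv[OF yI(2)[OF that]] by (auto intro!: derivative_eq_intros)
  qed
  have a0: "\<alpha> \<noteq> 0"
  proof
    assume "\<alpha> = 0"
    then have "gg y = 0" if "y \<in> J" for y
      using D2[OF that] K0 ff_pos[OF yI(2)[OF that]] by simp
    note gz = this
    have "y = -1" if "y \<in> J" for y
    proof -
      have yn: "y \<noteq> 0" using yI(2)[OF that] .
      have "-(3/2) * (1/y^2 + 1/y) = 0" using gz[OF that] by (simp only: gg_def)
      then have "1/y^2 + 1/y = 0" by simp
      moreover have "1/y^2 + 1/y = (1 + y) / y^2" using yn by (simp add: field_simps power2_eq_square)
      ultimately have "(1 + y) / y^2 = 0" by simp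
      then show ?thesis using yn by simp
    qed
    note m1 = this
    have "y1 = -1" "y2 = -1" using m1[OF y1] m1[OF y2] .
    then show False using y12 by simp
  qed
  have W2: "W y ^ 2 = K * gg y / (3 * \<alpha>)" if "y \<in> J" for y
    using D2[OF that] ff_pos[OF yI(2)[OF that]] a0 by (simp add: field_simps)
  have D3: "2 * W y * (\<alpha> * ff y) = K * ((3/2) * (2/y^3 + 1/y^2)) / (3 * \<alpha>)" if "y \<in> J" for y
  proof (rule deriv_eq[OF oJ that])
    show "W z ^ 2 = K * gg z / (3 * \<alpha>)" if "z \<in> J" for z using W2[OF that] .
    show "((\<lambda>z. W z ^ 2) has_real_derivative 2 * W y * (\<alpha> * ff y)) (at y)"
      using WD[OF that] by (auto intro!: derivative_eq_intros)
    show "((\<lambda>z. K * gg z / (3 * \<alpha>)) has_real_derivative K * ((3/2) * (2/y^3 + 1/y^2)) / (3 * \<alpha>)) (at y)"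
      using gg_deriv[OF yI(2)[OF that]] a0 by (auto intro!: derivative_eq_intros)
  qed
  have y0: "y1 \<noteq> 0" using yI(2)[OF y1] .
  have ffW: "ff y1 = W y1 ^ 3 / K" using cube[OF y1] K0 by simp
  have "(W y1 ^ 2) ^ 2 = (K * gg y1 / (3 * \<alpha>)) ^ 2" using W2[OF y1] by simp
  moreover have "(W y1 ^ 2) ^ 2 = K^2 * ((3/2) * (2/y1^3 + 1/y1^2)) / (6 * \<alpha>^2)"
  proof -
    have "2 * \<alpha> * (W y1 ^ 4) / K = K * ((3/2) * (2/y1^3 + 1/y1^2)) / (3 * \<alpha>)"
      using D3[OF y1] ffW by (simp add: power_numeral_reduce field_simps)
    then show ?thesis using K0 a0 by (simp add: field_simps power2_eq_square power_numeral_reduce)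
  qed
  ultimately have "(K * gg y1 / (3 * \<alpha>)) ^ 2 = K^2 * ((3/2) * (2/y1^3 + 1/y1^2)) / (6 * \<alpha>^2)" by simp
  then have "2 * gg y1 ^ 2 = 3 * ((3/2) * (2/y1^3 + 1/y1^2))"
    by (rule canc[OF K0 a0])
  then have "2 * (-(3/2) * (1/y1^2 + 1/y1))^2 = 3 * ((3/2) * (2/y1^3 + 1/y1^2))"
    by (simp only: gg_def)
  then show False by (rule fin[OF y0])
qed



lemma distbox: fixes x y a b d :: real assumes "\<bar>x - a\<bar> < d" "\<bar>y - b\<bar> < d" shows "dist (x, y) (a, b) < 2 * d"
proof -
  define u where "u = dist x a"
  define v where "v = dist y b"
  have uv: "u \<ge> 0" "v \<ge> 0" by (auto simp: u_def v_def)
  have "u^2 + v^2 \<le> (u + v)^2" using uv by (simp add: power2_eq_square algebra_simps)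
  then have "sqrt (u^2 + v^2) \<le> sqrt ((u + v)^2)" by (rule real_sqrt_le_mono)
  also have "\<dots> = u + v" using uv by simp
  finally have "dist (x,y) (a,b) \<le> u + v" by (simp add: dist_Pair_Pair u_def v_def)
  then show ?thesis using assms by (simp add: dist_real_def u_def v_def)
qed

lemma pd:
  fixes \<phi> :: "real \<times> real \<Rightarrow> real \<times> real"
  assumes D: "(\<phi> has_derivative Df) (at (x, y))"
  shows "((\<lambda>t. fst (\<phi> (t, y))) has_real_derivative fst (Df (1, 0))) (at x)"
    "((\<lambda>t. snd (\<phi> (t, y))) has_real_derivative snd (Df (1, 0))) (at x)"
    "((\<lambda>t. fst (\<phi> (x, t))) has_real_derivative fst (Df (0, 1))) (at y)"
    "((\<lambda>t. snd (\<phi> (x, t))) has_real_derivative snd (Df (0, 1))) (at y)"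
proof -
  have lin: "linear Df" using D by (rule has_derivative_linear)
  have sx: "Df (h, 0) = h *\<^sub>R Df (1, 0)" for h
    using linear_cmul[OF lin, of h "(1,0)"] by simp
  have sy: "Df (0, h) = h *\<^sub>R Df (0, 1)" for h
    using linear_cmul[OF lin, of h "(0,1)"] by simp
  have cx: "((\<lambda>t. (t, y)) has_derivative (\<lambda>h. (h, 0))) (at x)"
    by (auto intro!: derivative_eq_intros)
  have cy: "((\<lambda>t. (x, t)) has_derivative (\<lambda>h. (0, h))) (at y)"
    by (auto intro!: derivative_eq_intros)
  have Dx: "((\<lambda>t. \<phi> (t, y)) has_derivative (\<lambda>h. Df (h, 0))) (at x)"
    using has_derivative_compose[OF cx, of \<phi> Df] D by simp
  have Dy: "((\<lambda>t. \<phi> (x, t)) has_derivative (\<lambda>h. Df (0, h))) (at y)"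
    using has_derivative_compose[OF cy, of \<phi> Df] D by simp
  have fx1: "(\<lambda>h. fst (Df (h, 0))) = (*) (fst (Df (1, 0)))"
  proof (rule ext) fix h show "fst (Df (h, 0)) = fst (Df (1, 0)) * h" using sx[of h] by simp qed
  have fx2: "(\<lambda>h. snd (Df (h, 0))) = (*) (snd (Df (1, 0)))"
  proof (rule ext) fix h show "snd (Df (h, 0)) = snd (Df (1, 0)) * h" using sx[of h] by simp qed
  have fx3: "(\<lambda>h. fst (Df (0, h))) = (*) (fst (Df (0, 1)))"
  proof (rule ext) fix h show "fst (Df (0, h)) = fst (Df (0, 1)) * h" using sy[of h] by simp qed
  have fx4: "(\<lambda>h. snd (Df (0, h))) = (*) (snd (Df (0, 1)))"
  proof (rule ext) fix h show "snd (Df (0, h)) = snd (Df (0, 1)) * h" using sy[of h] by simp qed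
  note fx = fx1 fx2 fx3 fx4
  show "((\<lambda>t. fst (\<phi> (t, y))) has_real_derivative fst (Df (1, 0))) (at x)"
    using has_derivative_fst[OF Dx] unfolding has_field_derivative_def fx .
  show "((\<lambda>t. snd (\<phi> (t, y))) has_real_derivative snd (Df (1, 0))) (at x)"
    using has_derivative_snd[OF Dx] unfolding has_field_derivative_def fx .
  show "((\<lambda>t. fst (\<phi> (x, t))) has_real_derivative fst (Df (0, 1))) (at y)"
    using has_derivative_fst[OF Dy] unfolding has_field_derivative_def fx .
  show "((\<lambda>t. snd (\<phi> (x, t))) has_real_derivative snd (Df (0, 1))) (at y)"
    using has_derivative_snd[OF Dy] unfolding has_field_derivative_def fx .
qed

lemma box:
  fixes h :: "real \<times> real \<Rightarrow> real"
  assumes "open W" "p \<in> W" "isCont h p" "h p \<noteq> 0"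
  shows "\<exists>\<delta>>0. \<forall>x y. \<bar>x - fst p\<bar> < \<delta> \<longrightarrow> \<bar>y - snd p\<bar> < \<delta> \<longrightarrow> (x, y) \<in> W \<and> h (x, y) \<noteq> 0"
proof -
  obtain e1 where e1: "e1 > 0" "\<And>q. dist p q < e1 \<Longrightarrow> h q \<noteq> 0"
    using continuous_at_avoid[OF assms(3,4)] by blast
  obtain e2 where e2: "e2 > 0" "ball p e2 \<subseteq> W"
    using assms(1,2) open_contains_ball by blast
  define \<delta> where "\<delta> = min e1 e2 / 2"
  have "\<delta> > 0" using e1 e2 by (simp add: \<delta>_def)
  moreover have "(x, y) \<in> W \<and> h (x, y) \<noteq> 0" if "\<bar>x - fst p\<bar> < \<delta>" "\<bar>y - snd p\<bar> < \<delta>" for x y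
  proof -
    have "dist (x, y) (fst p, snd p) < 2 * \<delta>" by (rule distbox[OF that])
    then have d: "dist p (x, y) < min e1 e2" by (simp add: \<delta>_def dist_commute)
    then show ?thesis using e1(2)[of "(x,y)"] e2(2) by (auto simp: dist_commute)
  qed
  ultimately show ?thesis by blast
qed



theorem lemma7p1:
  fixes I :: "real set" and Y :: "real \<Rightarrow> real" and \<kappa> \<kappa>' :: real
    and U V :: "(real \<times> real) set" and \<phi> :: "real \<times> real \<Rightarrow> real \<times> real"
  assumes I: "open I" "is_interval I" "I \<noteq> {}" "0 \<notin> I"
    and Y: "\<And>s. s \<in> I \<Longrightarrow> (Y has_real_derivative exp (3 / (2 * s)) / \<bar>s\<bar> powr (3/2)) (at s)"
    and kappa: "\<kappa> \<noteq> 0" "\<kappa>' \<noteq> 0"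
    and UV: "open U" "open V" "U \<noteq> {}" "U \<subseteq> UNIV \<times> I" "V \<subseteq> UNIV \<times> I"
    and phi: "local_diffeo_on U \<phi>" "\<phi> ` U \<subseteq> V"
    and pull: "\<And>p v w. p \<in> U \<Longrightarrow> pullback \<phi> (gmet Y \<kappa>') p v w = gmet Y \<kappa> p v w"
  shows "\<kappa> = \<kappa>'"
proof -
  have YD: "\<And>s. s \<in> I \<Longrightarrow> (Y has_real_derivative ff s) (at s)"
    using Y by (simp add: ff_def)
  obtain p0 where p0: "p0 \<in> U" using UV(3) by blast
  obtain W where W: "open W" "p0 \<in> W" "W \<subseteq> U" "smooth_on W \<phi>"
    using phi(1) p0 unfolding local_diffeo_on_def by blast
  have C1: "Ck_on (Suc 0) W \<phi>" using W(4) unfolding smooth_on_def by blast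
  then have dW: "\<phi> differentiable_on W" and cW: "\<And>v. continuous_on W (\<lambda>p. frechet_derivative \<phi> (at p) v)"
    by auto
  define D where "D p = frechet_derivative \<phi> (at p)" for p
  have hasD: "(\<phi> has_derivative D p) (at p)" if "p \<in> W" for p
    using dW W(1) that unfolding D_def
    by (simp add: differentiable_on_eq_differentiable_at frechet_derivative_works[symmetric])
  have cD: "isCont (\<lambda>p. D p v) p" if "p \<in> W" for p v
    using cW[of v] W(1) that unfolding D_def by (simp add: continuous_on_eq_continuous_at)
  have WI: "snd p \<in> I" if "p \<in> W" for p using that W(3) UV(4) by (auto simp: mem_Times_iff)
  have VI: "snd (\<phi> p) \<in> I" if "p \<in> W" for p
  proof -
    have "\<phi> p \<in> V" using that W(3) phi(2) by blast
    then have "\<phi> p \<in> UNIV \<times> I" using UV(5) by blast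
    then show ?thesis by (simp add: mem_Times_iff)
  qed
  define F where "F p = Y (snd p) + fst p" for p
  have cF: "isCont F p" if "p \<in> W" for p
  proof -
    have "isCont Y (snd p)" using YD[OF WI[OF that]] by (rule DERIV_isCont)
    then have "isCont (\<lambda>p. Y (snd p)) p" by (rule isCont_o2[rotated]) (simp add: continuous_intros)
    then show ?thesis unfolding F_def by (intro continuous_intros)
  qed
  define Px where "Px p = fst (D p (1, 0))" for p
  define Qx where "Qx p = snd (D p (1, 0))" for p
  define Py where "Py p = fst (D p (0, 1))" for p
  define Qy where "Qy p = snd (D p (0, 1))" for p
  have mixed: "\<kappa>' * F (\<phi> p) * (Px p * Qy p + Qx p * Py p) = \<kappa> * F p" if "p \<in> W" for p
  proof -
    have "pullback \<phi> (gmet Y \<kappa>') p (1, 0) (0, 1) = gmet Y \<kappa> p (1, 0) (0, 1)"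
      using pull that W(3) by blast
    then show ?thesis
      by (simp add: pullback_def gmet_def D_def[symmetric] F_def Px_def Qx_def Py_def Qy_def field_simps)
  qed
  have xx: "F (\<phi> p) * (Px p * Qx p) = 0" if "p \<in> W" for p
  proof -
    have "pullback \<phi> (gmet Y \<kappa>') p (1, 0) (1, 0) = gmet Y \<kappa> p (1, 0) (1, 0)"
      using pull that W(3) by blast
    then show ?thesis using kappa
      by (simp add: pullback_def gmet_def D_def[symmetric] F_def Px_def Qx_def)
  qed
  have yy: "F (\<phi> p) * (Py p * Qy p) = 0" if "p \<in> W" for p
  proof -
    have "pullback \<phi> (gmet Y \<kappa>') p (0, 1) (0, 1) = gmet Y \<kappa> p (0, 1) (0, 1)"
      using pull that W(3) by blast
    then show ?thesis using kappa
      by (simp add: pullback_def gmet_def D_def[symmetric] F_def Py_def Qy_def)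
  qed
  have ptw: "F (\<phi> p) \<noteq> 0 \<and> Px p * Qx p = 0 \<and> Py p * Qy p = 0 \<and> Px p * Qy p + Qx p * Py p \<noteq> 0"
    if "p \<in> W" "F p \<noteq> 0" for p
  proof -
    have "\<kappa>' * F (\<phi> p) * (Px p * Qy p + Qx p * Py p) \<noteq> 0" using mixed[OF that(1)] that(2) kappa by simp
    then show ?thesis using xx[OF that(1)] yy[OF that(1)] by auto
  qed
  obtain e where e: "e > 0" "ball p0 e \<subseteq> W" using W(1,2) open_contains_ball by blast
  obtain p1 where p1: "p1 \<in> W" "F p1 \<noteq> 0"
  proof (cases "F p0 = 0")
    case False then show ?thesis using that W(2) by blast
  next
    case True
    obtain a0 b0 where ab: "p0 = (a0, b0)" by (cases p0)
    define p1 where "p1 = (a0 + e/2, b0)"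
    have "dist p0 p1 < e" using e(1) by (simp add: ab p1_def dist_Pair_Pair dist_real_def)
    then have "p1 \<in> W" using e(2) by auto
    moreover have "F p1 \<noteq> 0" using True e(1) by (simp add: F_def ab p1_def)
    ultimately show ?thesis using that by blast
  qed
  define x1 where "x1 = fst p1"
  define y1 where "y1 = snd p1"
  have cPx: "isCont Px p" "isCont Qx p" "isCont Py p" "isCont Qy p" if "p \<in> W" for p
    using cD[OF that, of "(1,0)"] cD[OF that, of "(0,1)"]
    unfolding Px_def Qx_def Py_def Qy_def by (auto intro: continuous_intros)
  have Pconst: "\<exists>c. \<forall>t\<in>{yl<..<yr}. fst (\<phi> (x, t)) = c"
    if "\<And>t. t \<in> {yl<..<yr} \<Longrightarrow> (x, t) \<in> W \<and> Py (x, t) = 0" for x yl yr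
  proof (rule has_field_derivative_zero_constant)
    fix t assume t: "t \<in> {yl<..<yr}"
    have "((\<lambda>t. fst (\<phi> (x, t))) has_real_derivative Py (x, t)) (at t)"
      using pd(3)[OF hasD] that[OF t] unfolding Py_def by blast
    then show "((\<lambda>t. fst (\<phi> (x, t))) has_real_derivative 0) (at t within {yl<..<yr})"
      using that[OF t] by (simp add: has_field_derivative_at_within)
  qed simp
  have Qconst: "\<exists>c. \<forall>t\<in>{yl<..<yr}. snd (\<phi> (x, t)) = c"
    if "\<And>t. t \<in> {yl<..<yr} \<Longrightarrow> (x, t) \<in> W \<and> Qy (x, t) = 0" for x yl yr
  proof (rule has_field_derivative_zero_constant)
    fix t assume t: "t \<in> {yl<..<yr}"
    have "((\<lambda>t. snd (\<phi> (x, t))) has_real_derivative Qy (x, t)) (at t)"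
      using pd(4)[OF hasD] that[OF t] unfolding Qy_def by blast
    then show "((\<lambda>t. snd (\<phi> (x, t))) has_real_derivative 0) (at t within {yl<..<yr})"
      using that[OF t] by (simp add: has_field_derivative_at_within)
  qed simp
  have Pconstx: "\<exists>c. \<forall>t\<in>{xl<..<xr}. fst (\<phi> (t, y)) = c"
    if "\<And>t. t \<in> {xl<..<xr} \<Longrightarrow> (t, y) \<in> W \<and> Px (t, y) = 0" for y xl xr
  proof (rule has_field_derivative_zero_constant)
    fix t assume t: "t \<in> {xl<..<xr}"
    have "((\<lambda>t. fst (\<phi> (t, y))) has_real_derivative Px (t, y)) (at t)"
      using pd(1)[OF hasD] that[OF t] unfolding Px_def by blast
    then show "((\<lambda>t. fst (\<phi> (t, y))) has_real_derivative 0) (at t within {xl<..<xr})"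
      using that[OF t] by (simp add: has_field_derivative_at_within)
  qed simp
  have Qconstx: "\<exists>c. \<forall>t\<in>{xl<..<xr}. snd (\<phi> (t, y)) = c"
    if "\<And>t. t \<in> {xl<..<xr} \<Longrightarrow> (t, y) \<in> W \<and> Qx (t, y) = 0" for y xl xr
  proof (rule has_field_derivative_zero_constant)
    fix t assume t: "t \<in> {xl<..<xr}"
    have "((\<lambda>t. snd (\<phi> (t, y))) has_real_derivative Qx (t, y)) (at t)"
      using pd(2)[OF hasD] that[OF t] unfolding Qx_def by blast
    then show "((\<lambda>t. snd (\<phi> (t, y))) has_real_derivative 0) (at t within {xl<..<xr})"
      using that[OF t] by (simp add: has_field_derivative_at_within)
  qed simp
  show ?thesis
  proof (cases "Px p1 = 0")
    case False
    have "Qx p1 = 0" "Qy p1 \<noteq> 0" using ptw[OF p1] False by auto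
    then have h1: "F p1 * Px p1 * Qy p1 \<noteq> 0" using p1(2) False by simp
    have "isCont (\<lambda>p. F p * Px p * Qy p) p1"
      using cF[OF p1(1)] cPx[OF p1(1)] by (intro continuous_intros)
    from box[OF W(1) p1(1) this h1] obtain \<delta> where \<delta>: "\<delta> > 0"
      "\<And>x y. \<bar>x - x1\<bar> < \<delta> \<Longrightarrow> \<bar>y - y1\<bar> < \<delta> \<Longrightarrow> (x, y) \<in> W \<and> F (x, y) * Px (x, y) * Qy (x, y) \<noteq> 0"
      unfolding x1_def y1_def by blast
    define L where "L = {x1 - \<delta><..<x1 + \<delta>}"
    define J where "J = {y1 - \<delta><..<y1 + \<delta>}"
    have x1L: "x1 \<in> L" and y1J: "y1 \<in> J" using \<delta>(1) by (auto simp: L_def J_def)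
    have inB: "(x, y) \<in> W" "F (x, y) \<noteq> 0" "Px (x, y) \<noteq> 0" "Qy (x, y) \<noteq> 0"
      if "x \<in> L" "y \<in> J" for x y
      using \<delta>(2)[of x y] that by (auto simp: L_def J_def abs_less_iff)
    have zB: "Qx (x, y) = 0" "Py (x, y) = 0" if "x \<in> L" "y \<in> J" for x y
      using ptw[OF inB(1,2)[OF that]] inB(3,4)[OF that] by auto
    have Pc: "fst (\<phi> (x, y)) = fst (\<phi> (x, y1))" if "x \<in> L" "y \<in> J" for x y
    proof -
      have "\<exists>c. \<forall>t\<in>{y1 - \<delta><..<y1 + \<delta>}. fst (\<phi> (x, t)) = c"
        by (rule Pconst) (use inB(1)[OF that(1)] zB(2)[OF that(1)] in \<open>auto simp: J_def\<close>)
      then obtain c where "\<forall>t\<in>J. fst (\<phi> (x, t)) = c" unfolding J_def by blast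
      then show ?thesis using that(2) y1J by simp
    qed
    have Qc: "snd (\<phi> (x, y)) = snd (\<phi> (x1, y))" if "x \<in> L" "y \<in> J" for x y
    proof -
      have "\<exists>c. \<forall>t\<in>{x1 - \<delta><..<x1 + \<delta>}. snd (\<phi> (t, y)) = c"
        by (rule Qconstx) (use inB(1)[OF _ that(2)] zB(1)[OF _ that(2)] in \<open>auto simp: L_def\<close>)
      then obtain c where "\<forall>t\<in>L. snd (\<phi> (t, y)) = c" unfolding L_def by blast
      then show ?thesis using that(1) x1L by simp
    qed
    define a where "a x = fst (\<phi> (x, y1))" for x
    define a' where "a' x = Px (x, y1)" for x
    define b where "b y = snd (\<phi> (x1, y))" for y
    define b' where "b' y = Qy (x1, y)" for y
    have aD: "(a has_real_derivative a' x) (at x)" if "x \<in> L" for x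
      using pd(1)[OF hasD[OF inB(1)[OF that y1J]]] unfolding a_def a'_def Px_def by simp
    have bD: "(b has_real_derivative b' y) (at y)" if "y \<in> J" for y
      using pd(4)[OF hasD[OF inB(1)[OF x1L that]]] unfolding b_def b'_def Qy_def by simp
    have PxE: "Px (x, y) = a' x" if "x \<in> L" "y \<in> J" for x y
    proof (rule deriv_eq[of L x "\<lambda>t. fst (\<phi> (t, y))" a])
      show "open L" by (simp add: L_def)
      show "x \<in> L" by fact
      show "fst (\<phi> (z, y)) = a z" if "z \<in> L" for z using Pc[OF that \<open>y \<in> J\<close>] by (simp add: a_def)
      show "((\<lambda>t. fst (\<phi> (t, y))) has_real_derivative Px (x, y)) (at x)"
        using pd(1)[OF hasD[OF inB(1)[OF that]]] unfolding Px_def by simp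
      show "(a has_real_derivative a' x) (at x)" by (rule aD[OF that(1)])
    qed
    have QyE: "Qy (x, y) = b' y" if "x \<in> L" "y \<in> J" for x y
    proof (rule deriv_eq[of J y "\<lambda>t. snd (\<phi> (x, t))" b])
      show "open J" by (simp add: J_def)
      show "y \<in> J" by fact
      show "snd (\<phi> (x, z)) = b z" if "z \<in> J" for z using Qc[OF \<open>x \<in> L\<close> that] by (simp add: b_def)
      show "((\<lambda>t. snd (\<phi> (x, t))) has_real_derivative Qy (x, y)) (at y)"
        using pd(4)[OF hasD[OF inB(1)[OF that]]] unfolding Qy_def by simp
      show "(b has_real_derivative b' y) (at y)" by (rule bD[OF that(2)])
    qed
    show ?thesis
    proof (rule NS_case[OF I(4) YD])
      show "x1 - \<delta> < x1 + \<delta>" "y1 - \<delta> < y1 + \<delta>" using \<delta>(1) by auto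
      show "{y1 - \<delta><..<y1 + \<delta>} \<subseteq> I" using WI[OF inB(1)[OF x1L]] unfolding J_def by auto
      show "b y \<in> I" if "y \<in> {y1 - \<delta><..<y1 + \<delta>}" for y
        using VI[OF inB(1)[OF x1L]] that unfolding J_def b_def by auto
      show "(a has_real_derivative a' x) (at x)" if "x \<in> {x1 - \<delta><..<x1 + \<delta>}" for x
        using aD that unfolding L_def by blast
      show "a' x \<noteq> 0" if "x \<in> {x1 - \<delta><..<x1 + \<delta>}" for x
        using inB(3)[of x y1] y1J that unfolding L_def a'_def by blast
      show "(b has_real_derivative b' y) (at y)" if "y \<in> {y1 - \<delta><..<y1 + \<delta>}" for y
        using bD that unfolding J_def by blast
      show "b' y \<noteq> 0" if "y \<in> {y1 - \<delta><..<y1 + \<delta>}" for y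
        using inB(4)[of x1 y] x1L that unfolding J_def b'_def by blast
      show "\<kappa>' * (Y (b y) + a x) * (a' x * b' y) = \<kappa> * (Y y + x)"
        if "x \<in> {x1 - \<delta><..<x1 + \<delta>}" "y \<in> {y1 - \<delta><..<y1 + \<delta>}" for x y
      proof -
        have xy: "x \<in> L" "y \<in> J" using that unfolding L_def J_def by auto
        have "\<kappa>' * F (\<phi> (x, y)) * (Px (x, y) * Qy (x, y) + Qx (x, y) * Py (x, y)) = \<kappa> * F (x, y)"
          by (rule mixed[OF inB(1)[OF xy]])
        then show ?thesis
          using zB[OF xy] PxE[OF xy] QyE[OF xy] Pc[OF xy] Qc[OF xy]
          by (simp add: F_def a_def b_def)
      qed
    qed (use kappa in auto)
  next
    case True
    have "Qx p1 \<noteq> 0" "Py p1 \<noteq> 0" "Qy p1 = 0" using ptw[OF p1] True by auto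
    then have h1: "F p1 * Py p1 * Qx p1 \<noteq> 0" using p1(2) by simp
    have "isCont (\<lambda>p. F p * Py p * Qx p) p1"
      using cF[OF p1(1)] cPx[OF p1(1)] by (intro continuous_intros)
    from box[OF W(1) p1(1) this h1] obtain \<delta> where \<delta>: "\<delta> > 0"
      "\<And>x y. \<bar>x - x1\<bar> < \<delta> \<Longrightarrow> \<bar>y - y1\<bar> < \<delta> \<Longrightarrow> (x, y) \<in> W \<and> F (x, y) * Py (x, y) * Qx (x, y) \<noteq> 0"
      unfolding x1_def y1_def by blast
    define L where "L = {x1 - \<delta><..<x1 + \<delta>}"
    define J where "J = {y1 - \<delta><..<y1 + \<delta>}"
    have x1L: "x1 \<in> L" and y1J: "y1 \<in> J" using \<delta>(1) by (auto simp: L_def J_def)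
    have inB: "(x, y) \<in> W" "F (x, y) \<noteq> 0" "Py (x, y) \<noteq> 0" "Qx (x, y) \<noteq> 0"
      if "x \<in> L" "y \<in> J" for x y
      using \<delta>(2)[of x y] that by (auto simp: L_def J_def abs_less_iff)
    have zB: "Px (x, y) = 0" "Qy (x, y) = 0" if "x \<in> L" "y \<in> J" for x y
      using ptw[OF inB(1,2)[OF that]] inB(3,4)[OF that] by auto
    have Pc: "fst (\<phi> (x, y)) = fst (\<phi> (x1, y))" if "x \<in> L" "y \<in> J" for x y
    proof -
      have "\<exists>c. \<forall>t\<in>{x1 - \<delta><..<x1 + \<delta>}. fst (\<phi> (t, y)) = c"
        by (rule Pconstx) (use inB(1)[OF _ that(2)] zB(1)[OF _ that(2)] in \<open>auto simp: L_def\<close>)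
      then obtain c where "\<forall>t\<in>L. fst (\<phi> (t, y)) = c" unfolding L_def by blast
      then show ?thesis using that(1) x1L by simp
    qed
    have Qc: "snd (\<phi> (x, y)) = snd (\<phi> (x, y1))" if "x \<in> L" "y \<in> J" for x y
    proof -
      have "\<exists>c. \<forall>t\<in>{y1 - \<delta><..<y1 + \<delta>}. snd (\<phi> (x, t)) = c"
        by (rule Qconst) (use inB(1)[OF that(1)] zB(2)[OF that(1)] in \<open>auto simp: J_def\<close>)
      then obtain c where "\<forall>t\<in>J. snd (\<phi> (x, t)) = c" unfolding J_def by blast
      then show ?thesis using that(2) y1J by simp
    qed
    define a where "a y = fst (\<phi> (x1, y))" for y
    define a' where "a' y = Py (x1, y)" for y
    define b where "b x = snd (\<phi> (x, y1))" for x
    define b' where "b' x = Qx (x, y1)" for x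
    have aD: "(a has_real_derivative a' y) (at y)" if "y \<in> J" for y
      using pd(3)[OF hasD[OF inB(1)[OF x1L that]]] unfolding a_def a'_def Py_def by simp
    have bD: "(b has_real_derivative b' x) (at x)" if "x \<in> L" for x
      using pd(2)[OF hasD[OF inB(1)[OF that y1J]]] unfolding b_def b'_def Qx_def by simp
    have PyE: "Py (x, y) = a' y" if "x \<in> L" "y \<in> J" for x y
    proof (rule deriv_eq[of J y "\<lambda>t. fst (\<phi> (x, t))" a])
      show "open J" by (simp add: J_def)
      show "y \<in> J" by fact
      show "fst (\<phi> (x, z)) = a z" if "z \<in> J" for z using Pc[OF \<open>x \<in> L\<close> that] by (simp add: a_def)
      show "((\<lambda>t. fst (\<phi> (x, t))) has_real_derivative Py (x, y)) (at y)"
        using pd(3)[OF hasD[OF inB(1)[OF that]]] unfolding Py_def by simp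
      show "(a has_real_derivative a' y) (at y)" by (rule aD[OF that(2)])
    qed
    have QxE: "Qx (x, y) = b' x" if "x \<in> L" "y \<in> J" for x y
    proof (rule deriv_eq[of L x "\<lambda>t. snd (\<phi> (t, y))" b])
      show "open L" by (simp add: L_def)
      show "x \<in> L" by fact
      show "snd (\<phi> (z, y)) = b z" if "z \<in> L" for z using Qc[OF that \<open>y \<in> J\<close>] by (simp add: b_def)
      show "((\<lambda>t. snd (\<phi> (t, y))) has_real_derivative Qx (x, y)) (at x)"
        using pd(2)[OF hasD[OF inB(1)[OF that]]] unfolding Qx_def by simp
      show "(b has_real_derivative b' x) (at x)" by (rule bD[OF that(1)])
    qed
    have False
    proof (rule SW_case[OF I(4) YD])
      show "x1 - \<delta> < x1 + \<delta>" "y1 - \<delta> < y1 + \<delta>" using \<delta>(1) by auto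
      show "{y1 - \<delta><..<y1 + \<delta>} \<subseteq> I" using WI[OF inB(1)[OF x1L]] unfolding J_def by auto
      show "(a has_real_derivative a' y) (at y)" if "y \<in> {y1 - \<delta><..<y1 + \<delta>}" for y
        using aD that unfolding J_def by blast
      show "a' y \<noteq> 0" if "y \<in> {y1 - \<delta><..<y1 + \<delta>}" for y
        using inB(3)[of x1 y] x1L that unfolding J_def a'_def by blast
      show "b' x \<noteq> 0" if "x \<in> {x1 - \<delta><..<x1 + \<delta>}" for x
        using inB(4)[of x y1] y1J that unfolding L_def b'_def by blast
      show "\<kappa>' * (Y (b x) + a y) * (a' y * b' x) = \<kappa> * (Y y + x)"
        if "x \<in> {x1 - \<delta><..<x1 + \<delta>}" "y \<in> {y1 - \<delta><..<y1 + \<delta>}" for x y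
      proof -
        have xy: "x \<in> L" "y \<in> J" using that unfolding L_def J_def by auto
        have "\<kappa>' * F (\<phi> (x, y)) * (Px (x, y) * Qy (x, y) + Qx (x, y) * Py (x, y)) = \<kappa> * F (x, y)"
          by (rule mixed[OF inB(1)[OF xy]])
        then show ?thesis
          using zB[OF xy] PyE[OF xy] QxE[OF xy] Pc[OF xy] Qc[OF xy]
          by (simp add: F_def a_def b_def mult.commute)
      qed
    qed (use kappa in auto)
    then show ?thesis ..
  qed
qed

end
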